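(* Let $n\ge 1$ and $1\le k\le n+1$ be integers, let $q$ be a prime power, and let $T$ be a hereditary property of families. If every family $\mathcal{F}\subseteq 2^{[n]}$ satisfying $T$ has at most $\Sigma(n,k)$ members, then every family of subspaces of $\mathbb{F}_q^n$ with property $T$ has at most $\Sigma_q(n,k)$ members.
   Context: $[n]=\{1,\dots,n\}$ and $2^{[n]}$ is the family of all its subsets. $\mathbb{F}_q^n$ is the $n$-dimensional vector space over the field with $q$ elements. A property $T$ of families is a property that makes sense for families of members of any lattice (such as $2^{[n]}$ ordered by inclusion, or the subspaces of $\mathbb{F}_q^n$ ordered by inclusion), defined in terms of the inclusion/intersection structure of the family, so that it is preserved by injective maps preserving inclusion, intersection and span/union (e.g. properties defined by forbidding inclusion patterns); it is hereditary if every subfamily of a family with property $T$ also has property $T$. $\Sigma(n,k)=\sum_{i=1}^k\binom{n}{\lfloor\frac{n-k}{2}\rfloor+i}$ is the total size of the $k$ middle levels of $2^{[n]}$, and $\Sigma_q(n,k)=\sum_{i=1}^k{n \brack \lfloor\frac{n-k}{2}\rfloor+i}_q$, where ${n\brack j}_q=\frac{(q^n-1)(q^{n-1}-1)\cdots(q^{n-j+1}-1)}{(q^j-1)(q^{j-1}-1)\cdots(q-1)}$ is the number of $j$-dimensional subspaces of $\mathbb{F}_q^n$. *)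

theory Defs
  imports Complex_Main "HOL-Library.Function_Algebras" "HOL-Library.Cardinality"
begin

text \<open>Vectors of F_q^n are functions 'n \<Rightarrow> 'a with CARD('n) = n and 'a a finite field
  (so q = CARD('a)); subsets of [n] are subsets of the finite type 'n.\<close>

definition vscale :: "'a::field \<Rightarrow> ('n \<Rightarrow> 'a) \<Rightarrow> ('n \<Rightarrow> 'a)" where
  "vscale c v = (\<lambda>i. c * v i)"

definition subspaces :: "('n \<Rightarrow> 'a::field) set set" where
  "subspaces = {S. module.subspace vscale S}"

definition vspan :: "('n \<Rightarrow> 'a::field) set \<Rightarrow> ('n \<Rightarrow> 'a) set" where
  "vspan S = module.span vscale S"

text \<open>Sigma(n,k) = sum_{i=1}^k binom(n, floor((n-k)/2) + i); int div is floor division.\<close>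
definition Sigma_mid :: "nat \<Rightarrow> nat \<Rightarrow> nat" where
  "Sigma_mid n k = (\<Sum>i=1..k. n choose nat ((int n - int k) div 2 + int i))"

definition qbinom :: "nat \<Rightarrow> nat \<Rightarrow> nat \<Rightarrow> real" where
  "qbinom q n j = (\<Prod>i<j. real q ^ (n - i) - 1) / (\<Prod>i<j. real q ^ (i + 1) - 1)"

definition Sigma_q :: "nat \<Rightarrow> nat \<Rightarrow> nat \<Rightarrow> real" where
  "Sigma_q q n k = (\<Sum>i=1..k. qbinom q n (nat ((int n - int k) div 2 + int i)))"

definition subspace_embedding :: "('n set \<Rightarrow> ('n \<Rightarrow> 'a::field) set) \<Rightarrow> bool" where
  "subspace_embedding \<phi> \<longleftrightarrow>
     (\<forall>A. \<phi> A \<in> subspaces) \<and> inj \<phi> \<and>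
     (\<forall>A B. A \<subseteq> B \<longleftrightarrow> \<phi> A \<subseteq> \<phi> B) \<and>
     (\<forall>A B. \<phi> (A \<inter> B) = \<phi> A \<inter> \<phi> B) \<and>
     (\<forall>A B. \<phi> (A \<union> B) = vspan (\<phi> A \<union> \<phi> B))"

end

theory Submission imports Defs "HOL-Library.FuncSet" begin

lemma vs: "vector_space (vscale :: 'a::field \<Rightarrow> ('n \<Rightarrow> 'a) \<Rightarrow> _)"
  by unfold_locales (auto simp: vscale_def fun_eq_iff algebra_simps)

interpretation V: vector_space "vscale :: 'a::field \<Rightarrow> ('n \<Rightarrow> 'a) \<Rightarrow> _"
  by (rule vs)

lemma card_span_indep:
  fixes S :: "('n::finite \<Rightarrow> 'a::{field,finite}) set"
  shows "V.independent S \<Longrightarrow> card (V.span S) = CARD('a) ^ card S"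
proof (induction S rule: finite_induct[OF finite])
  case 1 then show ?case by simp
next
  case (2 x F)
  have ind: "V.independent F" and xn: "x \<notin> V.span F"
    using 2(2,4) V.independent_insert[of x F] by auto
  define f where "f = (\<lambda>p::'a \<times> ('n \<Rightarrow> 'a). vscale (fst p) x + snd p)"
  have "bij_betw f ((UNIV::'a set) \<times> V.span F) (V.span (insert x F))"
  proof (rule bij_betwI')
    fix a b assume "a \<in> (UNIV::'a set) \<times> V.span F" "b \<in> (UNIV::'a set) \<times> V.span F"
    then obtain c y c' y' where ab: "a = (c,y)" "b = (c',y')" "y \<in> V.span F" "y' \<in> V.span F" by auto
    show "(f a = f b) = (a = b)"
    proof
      assume eq: "f a = f b"
      have "vscale (c - c') x = y' - y" using eq ab
        by (auto simp: f_def vscale_def fun_eq_iff algebra_simps)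
      hence sp: "vscale (c - c') x \<in> V.span F" using ab V.span_diff by metis
      have "c = c'"
      proof (rule ccontr)
        assume "c \<noteq> c'"
        hence "vscale (1/(c-c')) (vscale (c - c') x) = x" by (simp add: vscale_def fun_eq_iff)
        with sp V.span_scale xn show False by metis
      qed
      with eq ab show "a = b" by (auto simp: f_def)
    qed auto
  next
    fix a assume "a \<in> (UNIV::'a set) \<times> V.span F"
    then obtain c y where "a = (c,y)" "y \<in> V.span F" by auto
    then show "f a \<in> V.span (insert x F)"
      using V.span_mono[of F "insert x F"]
      by (simp add: f_def V.span_add V.span_scale V.span_base subset_iff)
  next
    fix z assume "z \<in> V.span (insert x F)"
    then obtain k where "z - vscale k x \<in> V.span F" using V.span_breakdown_eq by blast
    then show "\<exists>a\<in>(UNIV::'a set) \<times> V.span F. z = f a"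
      by (intro bexI[of _ "(k, z - vscale k x)"]) (auto simp: f_def)
  qed
  hence "card (V.span (insert x F)) = CARD('a) * card (V.span F)"
    by (metis bij_betw_same_card card_cartesian_product)
  with 2 ind show ?case by simp
qed

lemma card_subspace:
  fixes U :: "('n::finite \<Rightarrow> 'a::{field,finite}) set"
  assumes "V.subspace U"
  shows "card U = CARD('a) ^ V.dim U"
proof -
  obtain B where B: "B \<subseteq> U" "V.independent B" "U \<subseteq> V.span B" "card B = V.dim U"
    using V.basis_exists by blast
  have "V.span B = U" using B assms V.span_minimal by blast
  with B card_span_indep show ?thesis by metis
qed

lemma q_ge2: "CARD('a::{field,finite}) \<ge> 2"
proof -
  have "card {0::'a,1} \<le> CARD('a)" by (rule card_mono) auto
  thus ?thesis by simp
qed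

lemma dim_UNIV_eq:
  "V.dim (UNIV :: ('n::finite \<Rightarrow> 'a::{field,finite}) set) = CARD('n)"
proof -
  have "CARD('a) ^ V.dim (UNIV :: ('n \<Rightarrow> 'a) set) = CARD('a) ^ CARD('n)"
  proof -
    have "card (UNIV::('n\<Rightarrow>'a) set) = CARD('a)^V.dim (UNIV::('n\<Rightarrow>'a) set)"
      by (rule card_subspace) simp
    thus ?thesis by (simp add: card_fun)
  qed
  moreover have "CARD('a) \<ge> 2" by (rule q_ge2)
  ultimately show ?thesis using power_inject_exp by (metis Suc_1 Suc_le_lessD)
qed

definition ext :: "('n \<Rightarrow> 'a::field) set \<Rightarrow> ('n \<Rightarrow> 'a) set \<Rightarrow> 'i set \<Rightarrow> ('i \<Rightarrow> ('n \<Rightarrow> 'a)) set" where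
  "ext U S I = {f. (\<forall>i. i \<notin> I \<longrightarrow> f i = 0) \<and> f ` I \<subseteq> U \<and> inj_on f I \<and> f ` I \<inter> S = {}
                  \<and> V.independent (S \<union> f ` I)}"

lemma finite_zero_outside:
  assumes "finite I"
  shows "finite {f :: 'i \<Rightarrow> 'b::{zero,finite}. \<forall>i. i \<notin> I \<longrightarrow> f i = 0}"
proof -
  have "{f :: 'i \<Rightarrow> 'b. \<forall>i. i \<notin> I \<longrightarrow> f i = 0} \<subseteq> (\<lambda>g i. if i\<in>I then g i else 0) ` (PiE I (\<lambda>_. UNIV))"
  proof
    fix f :: "'i \<Rightarrow> 'b" assume a: "f \<in> {f. \<forall>i. i \<notin> I \<longrightarrow> f i = 0}"
    have "f = (\<lambda>i. if i\<in>I then restrict f I i else 0)" using a by (simp add: fun_eq_iff)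
    moreover have "restrict f I \<in> PiE I (\<lambda>_. UNIV)" by simp
    ultimately show "f \<in> (\<lambda>g i. if i\<in>I then g i else 0) ` (PiE I (\<lambda>_. UNIV))" by (rule rev_image_eqI[rotated])
  qed
  moreover have "finite (PiE I (\<lambda>_. UNIV :: 'b set))" using assms by (intro finite_PiE) auto
  ultimately show ?thesis using finite_imageI finite_subset by blast
qed

lemma finite_ext:
  fixes U S :: "('n::finite \<Rightarrow> 'a::{field,finite}) set" and I :: "'i set"
  assumes "finite I" shows "finite (ext U S I)"
proof -
  have "ext U S I \<subseteq> {f. \<forall>i. i \<notin> I \<longrightarrow> f i = 0}" unfolding ext_def by blast
  thus ?thesis using finite_zero_outside[OF assms] finite_subset by blast
qed

lemma ext_card:
  fixes U S :: "('n::finite \<Rightarrow> 'a::{field,finite}) set" and I :: "'i set"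
  assumes U: "V.subspace U" and SU: "S \<subseteq> U" and Si: "V.independent S" and fI: "finite I"
  shows "card (ext U S I) = (\<Prod>i<card I. CARD('a) ^ V.dim U - CARD('a) ^ (card S + i))"
  using fI
proof (induction I rule: finite_induct)
  case empty
  have "ext U S ({}::'i set) = {\<lambda>_. 0}" using Si by (auto simp: ext_def)
  then show ?case by simp
next
  case (insert x I)
  let ?q = "CARD('a)"
  define h where "h = (\<lambda>f::'i \<Rightarrow> ('n \<Rightarrow> 'a). (f(x:=0), f x))"
  define h' where "h' = (\<lambda>p::('i \<Rightarrow> ('n \<Rightarrow> 'a)) \<times> ('n \<Rightarrow> 'a). (fst p)(x := snd p))"
  have bij: "bij_betw h (ext U S (insert x I)) (Sigma (ext U S I) (\<lambda>g. U - V.span (S \<union> g ` I)))"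
  proof (rule bij_betwI[where g=h'])
    show "h \<in> ext U S (insert x I) \<rightarrow> Sigma (ext U S I) (\<lambda>g. U - V.span (S \<union> g ` I))"
    proof
      fix f assume f: "f \<in> ext U S (insert x I)"
      have img: "(f(x:=0)) ` I = f ` I" using insert(2) by auto
      have fxn: "f x \<notin> S \<union> f ` I" using f insert(2) by (auto simp: ext_def)
      have "V.independent (insert (f x) (S \<union> f ` I))" using f by (auto simp: ext_def)
      hence "f x \<notin> V.span (S \<union> f ` I)" using fxn V.independent_insert[of "f x" "S \<union> f ` I"] by simp
      moreover have fe: "f(x:=0) \<in> ext U S I"
      proof -
        have i1: "inj_on (f(x:=0)) I" using f insert(2) by (auto simp: ext_def inj_on_def)
        have i0: "V.independent (S \<union> f ` insert x I)" using f by (simp add: ext_def)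
        have i2: "V.independent (S \<union> f ` I)"
          by (rule V.independent_mono[OF i0]) auto
        show ?thesis unfolding ext_def mem_Collect_eq img
          using f insert(2) i1 i2 by (intro conjI) (auto simp: ext_def)
      qed
      moreover have fU: "f x \<in> U" using f by (simp add: ext_def)
      moreover have fs: "f x \<notin> V.span (S \<union> (f(x:=0)) ` I)"
        unfolding img by fact
      have "h f = (f(x:=0), f x)" by (simp add: h_def)
      moreover have "(f(x:=0), f x) \<in> Sigma (ext U S I) (\<lambda>g. U - V.span (S \<union> g ` I))"
        using SigmaI[OF fe, of "f x" "\<lambda>g. U - V.span (S \<union> g ` I)"] fU fs by blast
      ultimately show "h f \<in> Sigma (ext U S I) (\<lambda>g. U - V.span (S \<union> g ` I))"
        by simp
    qed
  next
    show "h' \<in> Sigma (ext U S I) (\<lambda>g. U - V.span (S \<union> g ` I)) \<rightarrow> ext U S (insert x I)"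
    proof
      fix p assume "p \<in> Sigma (ext U S I) (\<lambda>g. U - V.span (S \<union> g ` I))"
      then obtain g v where p: "p = (g, v)" "g \<in> ext U S I" "v \<in> U" "v \<notin> V.span (S \<union> g ` I)"
        by auto
      have img: "(g(x:=v)) ` I = g ` I" using insert(2) by auto
      have vn: "v \<notin> S \<union> g ` I" using p(4) V.span_base[of v "S \<union> g ` I"] by fast
      have gI: "V.independent (S \<union> g ` I)" "g ` I \<subseteq> U" "inj_on g I" "g ` I \<inter> S = {}"
        "\<forall>i. i \<notin> I \<longrightarrow> g i = 0"
        using p(2) by (simp_all add: ext_def)
      have ind: "V.independent (insert v (S \<union> g ` I))"
        using p(4) gI(1) V.independent_insertI by blast
      have img2: "(g(x:=v)) ` insert x I = insert v (g ` I)" by (simp only: image_insert fun_upd_same img)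
      have "inj_on (g(x:=v)) I \<longleftrightarrow> inj_on g I" by (rule inj_on_cong) (use insert(2) in auto)
      hence inj1: "inj_on (g(x:=v)) I" using gI(3) by simp
      have "I - {x} = I" using insert(2) by simp
      hence nv: "(g(x:=v)) x \<notin> (g(x:=v)) ` (I - {x})" using img vn by simp
      have inj: "inj_on (g(x:=v)) (insert x I)"
        unfolding inj_on_insert using inj1 nv by (intro conjI)
      have z: "\<forall>i. i \<notin> insert x I \<longrightarrow> (g(x:=v)) i = 0" using gI(5) by simp
      have hp: "h' p = g(x:=v)" using p(1) by (simp add: h'_def)
      show "h' p \<in> ext U S (insert x I)"
        unfolding hp ext_def mem_Collect_eq img2
        using z inj ind gI p(3) vn by (intro conjI) auto
    qed
  next
    fix f assume "f \<in> ext U S (insert x I)"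
    show "h' (h f) = f" by (simp add: h_def h'_def)
  next
    fix p assume "p \<in> Sigma (ext U S I) (\<lambda>g. U - V.span (S \<union> g ` I))"
    then obtain g v where p: "p = (g, v)" "g \<in> ext U S I" by auto
    have "g x = 0" using p(2) insert(2) by (auto simp: ext_def)
    then show "h (h' p) = p" using p by (auto simp: h_def h'_def)
  qed
  have each: "card (U - V.span (S \<union> g ` I)) = ?q ^ V.dim U - ?q ^ (card S + card I)"
    if g: "g \<in> ext U S I" for g
  proof -
    have sub: "V.span (S \<union> g ` I) \<subseteq> U"
      by (rule V.span_minimal) (use g SU U in \<open>auto simp: ext_def\<close>)
    have gg: "inj_on g I" "g ` I \<inter> S = {}" "V.independent (S \<union> g ` I)"
      using g by (simp_all add: ext_def)
    have "card (S \<union> g ` I) = card S + card (g ` I)"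
      by (rule card_Un_disjoint) (use gg in auto)
    also have "card (g ` I) = card I" using gg(1) by (rule card_image)
    finally have "card (S \<union> g ` I) = card S + card I" .
    hence "card (V.span (S \<union> g ` I)) = ?q ^ (card S + card I)"
      using card_span_indep[OF gg(3)] by simp
    thus ?thesis using sub card_subspace[OF U] by (simp add: card_Diff_subset)
  qed
  have "card (ext U S (insert x I)) = card (Sigma (ext U S I) (\<lambda>g. U - V.span (S \<union> g ` I)))"
    using bij by (rule bij_betw_same_card)
  also have "\<dots> = (\<Sum>g\<in>ext U S I. card (U - V.span (S \<union> g ` I)))"
    using finite_ext[OF insert(1)] by (intro card_SigmaI) auto
  also have "\<dots> = card (ext U S I) * (?q ^ V.dim U - ?q ^ (card S + card I))"
    using each by simp
  finally show ?case using insert by simp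
qed


lemma frame_mem:
  fixes B :: "'n::finite \<Rightarrow> ('m::finite \<Rightarrow> 'a::{field,finite})"
  assumes inj: "inj B" and ind: "V.independent (range B)"
  shows "B i \<in> V.span (B ` A) \<longleftrightarrow> i \<in> A"
proof
  assume a: "B i \<in> V.span (B ` A)"
  show "i \<in> A"
  proof (rule ccontr)
    assume "i \<notin> A"
    hence "B ` A \<subseteq> range B - {B i}" using inj by (auto simp: inj_def)
    hence "B i \<in> V.span (range B - {B i})" using a V.span_mono[of "B ` A" "range B - {B i}"] by fast
    hence "V.dependent (range B)" unfolding V.dependent_def by blast
    with ind show False by simp
  qed
next
  assume "i \<in> A" thus "B i \<in> V.span (B ` A)" by (intro V.span_base) simp
qed

lemma frame_inter:
  fixes B :: "'n::finite \<Rightarrow> ('m::finite \<Rightarrow> 'a::{field,finite})"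
  assumes inj: "inj B" and ind: "V.independent (range B)"
  shows "V.span (B ` A) \<inter> V.span (B ` A') \<subseteq> V.span (B ` (A \<inter> A'))"
proof
  fix v assume v: "v \<in> V.span (B ` A) \<inter> V.span (B ` A')"
  let ?R = "V.representation (range B) v"
  have vs: "v \<in> V.span (range B)" using v V.span_mono[of "B ` A" "range B"] by fast
  have RA: "?R = V.representation (B ` A) v"
    by (rule V.representation_extend[OF ind]) (use v in auto)
  have RA': "?R = V.representation (B ` A') v"
    by (rule V.representation_extend[OF ind]) (use v in auto)
  have supp: "b \<in> B ` (A \<inter> A')" if "?R b \<noteq> 0" for b
  proof -
    have "b \<in> B ` A" using that RA V.representation_ne_zero by metis
    moreover have "b \<in> B ` A'" using that RA' V.representation_ne_zero by metis
    ultimately show ?thesis using inj by (auto simp: inj_def)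
  qed
  have "v = (\<Sum>b | ?R b \<noteq> 0. vscale (?R b) b)"
    using V.sum_nonzero_representation_eq[OF ind vs] by simp
  also have "\<dots> \<in> V.span (B ` (A \<inter> A'))"
    by (rule V.span_sum, rule V.span_scale, rule V.span_base) (use supp in auto)
  finally show "v \<in> V.span (B ` (A \<inter> A'))" .
qed

lemma frame_embedding:
  fixes B :: "'n::finite \<Rightarrow> ('n \<Rightarrow> 'a::{field,finite})"
  assumes inj: "inj B" and ind: "V.independent (range B)"
  shows "subspace_embedding (\<lambda>A. V.span (B ` A))"
proof -
  have ord: "A \<subseteq> A' \<longleftrightarrow> V.span (B ` A) \<subseteq> V.span (B ` A')" for A A'
  proof
    assume "A \<subseteq> A'" thus "V.span (B ` A) \<subseteq> V.span (B ` A')" by (intro V.span_mono image_mono)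
  next
    assume a: "V.span (B ` A) \<subseteq> V.span (B ` A')"
    show "A \<subseteq> A'"
    proof
      fix i assume "i \<in> A"
      hence "B i \<in> V.span (B ` A)" using frame_mem[OF inj ind] by simp
      hence "B i \<in> V.span (B ` A')" using a by fast
      thus "i \<in> A'" using frame_mem[OF inj ind] by simp
    qed
  qed
  have "inj (\<lambda>A. V.span (B ` A))"
    by (rule injI) (use ord in blast)
  moreover have "V.span (B ` (A \<inter> A')) = V.span (B ` A) \<inter> V.span (B ` A')" for A A'
  proof
    show "V.span (B ` (A \<inter> A')) \<subseteq> V.span (B ` A) \<inter> V.span (B ` A')"
      using ord[of "A \<inter> A'" A] ord[of "A \<inter> A'" A'] by blast
  qed (rule frame_inter[OF inj ind])
  moreover have "V.span (B ` (A \<union> A')) = vspan (V.span (B ` A) \<union> V.span (B ` A'))" for A A'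
  proof -
    have "V.span (B ` A \<union> B ` A') = V.span (V.span (B ` A) \<union> V.span (B ` A'))"
    proof (rule V.span_eq[THEN iffD2], rule conjI)
      show "B ` A \<union> B ` A' \<subseteq> V.span (V.span (B ` A) \<union> V.span (B ` A'))"
        using V.span_superset[of "B ` A"] V.span_superset[of "B ` A'"]
              V.span_superset[of "V.span (B ` A) \<union> V.span (B ` A')"] by blast
      show "V.span (B ` A) \<union> V.span (B ` A') \<subseteq> V.span (B ` A \<union> B ` A')"
        using V.span_mono[of "B ` A" "B ` A \<union> B ` A'"] V.span_mono[of "B ` A'" "B ` A \<union> B ` A'"]
        by blast
    qed
    thus ?thesis by (simp add: vspan_def image_Un)
  qed
  ultimately show ?thesis
    unfolding subspace_embedding_def subspaces_def using ord by simp
qed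


lemma span_eq_of_card:
  fixes U X :: "('n::finite \<Rightarrow> 'a::{field,finite}) set"
  assumes U: "V.subspace U" and XU: "X \<subseteq> U" and ind: "V.independent X" and c: "card X = V.dim U"
  shows "V.span X = U"
proof (rule card_subset_eq)
  show "finite U" by simp
  show "V.span X \<subseteq> U" using V.span_minimal[OF XU U] .
  show "card (V.span X) = card U" using card_span_indep[OF ind] card_subspace[OF U] c by simp
qed

definition frames :: "('n \<Rightarrow> ('n \<Rightarrow> 'a::field)) set" where
  "frames = {B. inj B \<and> V.independent (range B)}"

lemma frames_ext: "(frames :: ('n \<Rightarrow> ('n \<Rightarrow> 'a::field)) set) = ext UNIV {} UNIV"
proof -
  have "V.independent ({} :: ('n \<Rightarrow> 'a) set)" by (rule V.independent_empty)
  thus ?thesis by (auto simp: frames_def ext_def)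
qed

lemma card_frames:
  "card (frames :: ('n::finite \<Rightarrow> ('n \<Rightarrow> 'a::{field,finite})) set)
     = (\<Prod>i<CARD('n). CARD('a) ^ CARD('n) - CARD('a) ^ i)"
  unfolding frames_ext by (subst ext_card) (auto simp: dim_UNIV_eq V.independent_empty)

lemma count_fixed_A:
  fixes U :: "('n::finite \<Rightarrow> 'a::{field,finite}) set" and A :: "'n set"
  assumes U: "V.subspace U" and cA: "card A = V.dim U"
  shows "card {B \<in> frames. V.span (B ` A) = U}
    = (\<Prod>i<V.dim U. CARD('a) ^ V.dim U - CARD('a) ^ i) *
      (\<Prod>i<CARD('n) - V.dim U. CARD('a) ^ CARD('n) - CARD('a) ^ (V.dim U + i))"
proof -
  let ?q = "CARD('a)" and ?n = "CARD('n)" and ?j = "V.dim U"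
  let ?X = "Sigma (ext U {} A) (\<lambda>f. ext UNIV (f ` A) (- A))"
  define h where "h = (\<lambda>B::'n \<Rightarrow> ('n \<Rightarrow> 'a). ((\<lambda>i. if i \<in> A then B i else 0), (\<lambda>i. if i \<in> A then 0 else B i)))"
  define h' where "h' = (\<lambda>p::('n \<Rightarrow> ('n \<Rightarrow> 'a)) \<times> ('n \<Rightarrow> ('n \<Rightarrow> 'a)). (\<lambda>i. if i \<in> A then fst p i else snd p i))"
  have bij: "bij_betw h {B \<in> frames. V.span (B ` A) = U} ?X"
  proof (rule bij_betwI[where g=h'])
    show "h \<in> {B \<in> frames. V.span (B ` A) = U} \<rightarrow> ?X"
    proof
      fix B assume B: "B \<in> {B \<in> frames. V.span (B ` A) = U}"
      have Bi: "inj B" "V.independent (range B)" "V.span (B ` A) = U" using B by (auto simp: frames_def)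
      define f where "f = (\<lambda>i. if i \<in> A then B i else 0)"
      define g where "g = (\<lambda>i. if i \<in> A then 0 else B i)"
      have fA: "f ` A = B ` A" by (auto simp: f_def)
      have gA: "g ` (- A) = B ` (- A)" by (auto simp: g_def)
      have un: "B ` A \<union> B ` (- A) = range B" by auto
      have "f \<in> ext U {} A"
        unfolding ext_def mem_Collect_eq fA
      proof (intro conjI)
        show "\<forall>i. i \<notin> A \<longrightarrow> f i = 0" by (simp add: f_def)
        show "B ` A \<subseteq> U" using Bi(3) V.span_superset[of "B ` A"] by simp
        show "inj_on f A" using Bi(1) by (auto simp: f_def inj_on_def inj_def)
        show "B ` A \<inter> {} = {}" by simp
        show "V.independent ({} \<union> B ` A)" using V.independent_mono[OF Bi(2), of "B ` A"] by auto
      qed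
      moreover have "g \<in> ext UNIV (f ` A) (- A)"
        unfolding ext_def mem_Collect_eq fA gA
      proof (intro conjI)
        show "\<forall>i. i \<notin> - A \<longrightarrow> g i = 0" by (simp add: g_def)
        show "B ` (- A) \<subseteq> UNIV" by simp
        show "inj_on g (- A)" using Bi(1) by (auto simp: g_def inj_on_def inj_def)
        show "B ` (- A) \<inter> B ` A = {}" using Bi(1) by (auto simp: inj_def)
        show "V.independent (B ` A \<union> B ` (- A))" using Bi(2) un by simp
      qed
      ultimately show "h B \<in> ?X" by (simp add: h_def f_def g_def)
    qed
  next
    show "h' \<in> ?X \<rightarrow> {B \<in> frames. V.span (B ` A) = U}"
    proof
      fix p assume "p \<in> ?X"
      then obtain f g where p: "p = (f, g)" "f \<in> ext U {} A" "g \<in> ext UNIV (f ` A) (- A)"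
        by auto
      have f: "f ` A \<subseteq> U" "inj_on f A" "V.independent (f ` A)"
        using p(2) by (simp_all add: ext_def)
      have g: "inj_on g (- A)" "g ` (- A) \<inter> f ` A = {}" "V.independent (f ` A \<union> g ` (- A))"
        using p(3) by (simp_all add: ext_def)
      define B where "B = h' p"
      have BA: "B ` A = f ` A" by (auto simp: B_def h'_def p(1))
      have BnA: "B ` (- A) = g ` (- A)" by (auto simp: B_def h'_def p(1))
      have rB: "range B = f ` A \<union> g ` (- A)"
        using BA BnA by (metis image_Un Compl_partition)
      have "inj B"
      proof (rule injI)
        fix a b assume e: "B a = B b"
        show "a = b"
        proof (cases "a \<in> A"; cases "b \<in> A")
          assume "a \<in> A" "b \<in> A" thus ?thesis using e f(2) by (auto simp: B_def h'_def p(1) inj_on_def)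
        next
          assume "a \<notin> A" "b \<notin> A" thus ?thesis using e g(1) by (auto simp: B_def h'_def p(1) inj_on_def)
        next
          assume "a \<in> A" "b \<notin> A" thus ?thesis using e g(2) by (auto simp: B_def h'_def p(1))
        next
          assume "a \<notin> A" "b \<in> A" thus ?thesis using e g(2) by (auto simp: B_def h'_def p(1))
        qed
      qed
      moreover have "V.independent (range B)" using rB g(3) by simp
      moreover have "V.span (B ` A) = U"
        unfolding BA
      proof (rule span_eq_of_card[OF U f(1) f(3)])
        show "card (f ` A) = V.dim U" using card_image[OF f(2)] cA by simp
      qed
      ultimately show "h' p \<in> {B \<in> frames. V.span (B ` A) = U}"
        by (simp add: frames_def B_def)
    qed
  next
    fix B show "h' (h B) = B" by (simp add: h_def h'_def fun_eq_iff)
  next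
    fix p assume "p \<in> ?X"
    then obtain f g where p: "p = (f, g)" "f \<in> ext U {} A" "g \<in> ext UNIV (f ` A) (- A)"
      by auto
    have "\<forall>i. i \<notin> A \<longrightarrow> f i = 0" "\<forall>i. i \<in> A \<longrightarrow> g i = 0"
      using p(2,3) by (simp_all add: ext_def)
    thus "h (h' p) = p" by (auto simp: h_def h'_def p(1) fun_eq_iff)
  qed
  have each: "card (ext UNIV (f ` A) (- A)) =
      (\<Prod>i<?n - ?j. ?q ^ ?n - ?q ^ (?j + i))" if f: "f \<in> ext U {} A" for f
  proof -
    have fi: "inj_on f A" "V.independent (f ` A)" using f by (simp_all add: ext_def)
    have "card (f ` A) = ?j" using card_image[OF fi(1)] cA by simp
    moreover have "card (- A) = ?n - ?j" using cA card_Diff_subset[of A UNIV] by (simp add: Compl_eq_Diff_UNIV)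
    ultimately show ?thesis
      by (subst ext_card) (simp_all add: fi dim_UNIV_eq)
  qed
  have "card {B \<in> frames. V.span (B ` A) = U} = card ?X" using bij by (rule bij_betw_same_card)
  also have "\<dots> = (\<Sum>f\<in>ext U {} A. card (ext UNIV (f ` A) (- A)))"
    by (rule card_SigmaI) (simp_all add: finite_ext)
  also have "\<dots> = card (ext U {} A) * (\<Prod>i<?n - ?j. ?q ^ ?n - ?q ^ (?j + i))"
    using each by simp
  also have "card (ext U {} A) = (\<Prod>i<?j. ?q ^ ?j - ?q ^ i)"
    by (subst ext_card) (simp_all add: U cA V.independent_empty)
  finally show ?thesis .
qed


definition cnt1 :: "nat \<Rightarrow> nat \<Rightarrow> nat" where
  "cnt1 q j = (\<Prod>i<j. q ^ j - q ^ i)"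
definition cnt2 :: "nat \<Rightarrow> nat \<Rightarrow> nat \<Rightarrow> nat" where
  "cnt2 q n j = (\<Prod>i<n - j. q ^ n - q ^ (j + i))"

lemma count_U:
  fixes U :: "('n::finite \<Rightarrow> 'a::{field,finite}) set"
  assumes U: "V.subspace U"
  shows "card {B \<in> frames. \<exists>A. V.span (B ` A) = U}
    = (CARD('n) choose V.dim U) * (cnt1 CARD('a) (V.dim U) * cnt2 CARD('a) CARD('n) (V.dim U))"
proof -
  let ?j = "V.dim U"
  let ?I = "{A::'n set. A \<subseteq> UNIV \<and> card A = ?j}"
  have eq: "{B \<in> frames. \<exists>A. V.span (B ` A) = U} = (\<Union>A\<in>?I. {B \<in> frames. V.span (B ` A) = U})"
  proof (rule set_eqI, rule iffI)
    fix B assume "B \<in> {B \<in> frames. \<exists>A. V.span (B ` A) = U}"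
    then obtain A where B: "B \<in> frames" "V.span (B ` A) = U" by auto
    have Bi: "inj B" "V.independent (range B)" using B(1) by (auto simp: frames_def)
    have "V.independent (B ` A)" using V.independent_mono[OF Bi(2), of "B ` A"] by auto
    hence "V.dim U = card (B ` A)" using B(2) V.dim_span_eq_card_independent by metis
    also have "\<dots> = card A" using Bi(1) by (simp add: card_image inj_on_def inj_def)
    finally show "B \<in> (\<Union>A\<in>?I. {B \<in> frames. V.span (B ` A) = U})" using B by auto
  qed auto
  have "card {B \<in> frames. \<exists>A. V.span (B ` A) = U} = (\<Sum>A\<in>?I. card {B \<in> frames. V.span (B ` A) = U})"
    unfolding eq
  proof (rule card_UN_disjoint)
    show "\<forall>A\<in>?I. \<forall>A'\<in>?I. A \<noteq> A' \<longrightarrow> {B \<in> frames. V.span (B ` A) = U} \<inter> {B \<in> frames. V.span (B ` A') = U} = {}"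
    proof (intro ballI impI)
      fix A A' :: "'n set" assume "A \<noteq> A'"
      show "{B \<in> frames. V.span (B ` A) = U} \<inter> {B \<in> frames. V.span (B ` A') = U} = {}"
      proof (rule ccontr)
        assume "{B \<in> frames. V.span (B ` A) = U} \<inter> {B \<in> frames. V.span (B ` A') = U} \<noteq> {}"
        then obtain B where B: "B \<in> frames" "V.span (B ` A) = U" "V.span (B ` A') = U" by auto
        have Bi: "inj B" "V.independent (range B)" using B(1) by (auto simp: frames_def)
        have "inj (\<lambda>A. V.span (B ` A))"
          using frame_embedding[OF Bi] by (simp add: subspace_embedding_def)
        with B(2,3) \<open>A \<noteq> A'\<close> show False by (auto dest: injD)
      qed
    qed
  qed auto
  also have "\<dots> = (\<Sum>A\<in>?I. cnt1 CARD('a) ?j * cnt2 CARD('a) CARD('n) ?j)"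
    by (rule sum.cong) (simp_all add: count_fixed_A[OF U] cnt1_def cnt2_def)
  also have "\<dots> = card ?I * (cnt1 CARD('a) ?j * cnt2 CARD('a) CARD('n) ?j)" by simp
  also have "card ?I = CARD('n) choose ?j" using n_subsets[of "UNIV :: 'n set" ?j] by simp
  finally show ?thesis .
qed

lemma count_sub:
  "card {U :: ('n::finite \<Rightarrow> 'a::{field,finite}) set. V.subspace U \<and> V.dim U = j} * cnt1 CARD('a) j
    = (\<Prod>i<j. CARD('a) ^ CARD('n) - CARD('a) ^ i)"
proof -
  let ?S = "{U :: ('n \<Rightarrow> 'a) set. V.subspace U \<and> V.dim U = j}"
  have e0: "V.independent ({} :: ('n \<Rightarrow> 'a) set)" by (rule V.independent_empty)
  have eq: "ext (UNIV :: ('n \<Rightarrow> 'a) set) {} {..<j} = (\<Union>U\<in>?S. ext U {} {..<j})"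
  proof (rule set_eqI, rule iffI)
    fix f assume f: "f \<in> ext (UNIV :: ('n \<Rightarrow> 'a) set) {} {..<j}"
    have fi: "inj_on f {..<j}" "V.independent (f ` {..<j})" using f by (simp_all add: ext_def)
    have "V.dim (V.span (f ` {..<j})) = j"
      using V.dim_span_eq_card_independent[OF fi(2)] card_image[OF fi(1)] by simp
    moreover have "f \<in> ext (V.span (f ` {..<j})) {} {..<j}"
      using f V.span_superset[of "f ` {..<j}"] by (auto simp: ext_def)
    ultimately show "f \<in> (\<Union>U\<in>?S. ext U {} {..<j})" by blast
  next
    fix f assume "f \<in> (\<Union>U\<in>?S. ext U {} {..<j})"
    thus "f \<in> ext (UNIV :: ('n \<Rightarrow> 'a) set) {} {..<j}" by (auto simp: ext_def)
  qed
  have "card (ext (UNIV :: ('n \<Rightarrow> 'a) set) {} {..<j}) = (\<Sum>U\<in>?S. card (ext U {} {..<j}))"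
    unfolding eq
  proof (rule card_UN_disjoint)
    show "\<forall>U\<in>?S. \<forall>U'\<in>?S. U \<noteq> U' \<longrightarrow> ext U {} {..<j} \<inter> ext U' {} {..<j} = {}"
    proof (intro ballI impI)
      fix U U' assume U: "U \<in> ?S" and U': "U' \<in> ?S" and ne: "U \<noteq> U'"
      show "ext U {} {..<j} \<inter> ext U' {} {..<j} = {}"
      proof (rule ccontr)
        assume "ext U {} {..<j} \<inter> ext U' {} {..<j} \<noteq> {}"
        then obtain f where f: "f \<in> ext U {} {..<j}" "f \<in> ext U' {} {..<j}" by blast
        have fi: "inj_on f {..<j}" "V.independent (f ` {..<j})" "f ` {..<j} \<subseteq> U" "f ` {..<j} \<subseteq> U'"
          using f by (simp_all add: ext_def)
        have c: "card (f ` {..<j}) = j" using card_image[OF fi(1)] by simp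
        have "V.span (f ` {..<j}) = U" using span_eq_of_card[OF _ fi(3) fi(2)] U c by simp
        moreover have "V.span (f ` {..<j}) = U'" using span_eq_of_card[OF _ fi(4) fi(2)] U' c by simp
        ultimately show False using ne by simp
      qed
    qed
  qed (auto simp: finite_ext)
  also have "\<dots> = (\<Sum>U\<in>?S. cnt1 CARD('a) j)"
    by (rule sum.cong) (simp_all add: ext_card e0 cnt1_def)
  finally show ?thesis using ext_card[of "UNIV :: ('n \<Rightarrow> 'a) set" "{}" "{..<j}"] e0 by (simp add: dim_UNIV_eq)
qed



lemma choose_step: "Suc j * (n choose Suc j) = (n - j) * (n choose j)"
  using times_binomial_minus1_eq[of "Suc j" n] binomial_absorb_comp[of n j] by simp

lemma hstep:
  fixes q :: real assumes q: "q \<ge> 2" and m: "m \<ge> 1"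
  shows "(q ^ m - 1) * (m + 1) \<le> (q ^ (m + 1) - 1) * m"
proof -
  have "0 \<le> q ^ m * (m * q - m - 1)"
  proof (rule mult_nonneg_nonneg)
    show "0 \<le> q ^ m" using q by simp
    have "real m * q \<ge> real m * 2" using q by (intro mult_left_mono) auto
    moreover have "real m \<ge> 1" using m by simp
    ultimately show "0 \<le> m * q - m - 1" by linarith
  qed
  thus ?thesis by (simp add: algebra_simps)
qed

lemma hmono:
  fixes q :: real assumes q: "q \<ge> 2" and a: "1 \<le> a" and ab: "a \<le> b"
  shows "(q ^ a - 1) * b \<le> (q ^ b - 1) * a"
  using ab
proof (induction b rule: dec_induct)
  case base then show ?case by simp
next
  case (step m)
  have m1: "m \<ge> 1" using a step by simp
  have p: "q ^ a - 1 \<ge> 0" using q by (simp add: one_le_power)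
  have "(q ^ a - 1) * real (Suc m) * m = (q ^ a - 1) * m * (m + 1)" by (simp add: algebra_simps)
  also have "\<dots> \<le> (q ^ m - 1) * a * (m + 1)" using step.IH by (intro mult_right_mono) auto
  also have "\<dots> = ((q ^ m - 1) * (m + 1)) * a" by (simp add: algebra_simps)
  also have "\<dots> \<le> ((q ^ (m + 1) - 1) * m) * a" using hstep[OF q m1] a by (intro mult_right_mono) auto
  finally have "(q ^ a - 1) * real (Suc m) * m \<le> (q ^ Suc m - 1) * a * m" by (simp add: algebra_simps)
  thus ?case using m1 by simp
qed

lemma qbinom_pos: assumes "q \<ge> 2" "j \<le> n" shows "qbinom q n j > 0"
proof -
  have "real q ^ (n - i) - 1 > 0" if "i < j" for i
  proof -
    have "real q ^ (n - i) > 1" using assms that by (intro one_less_power) auto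
    thus ?thesis by simp
  qed
  moreover have "real q ^ (i + 1) - 1 > 0" for i
  proof -
    have "real q ^ (i + 1) > 1" using assms by (intro one_less_power) auto
    thus ?thesis by simp
  qed
  ultimately show ?thesis unfolding qbinom_def by (intro divide_pos_pos prod_pos) auto
qed

lemma qbinom_Suc: "qbinom q n (Suc j) = qbinom q n j * ((real q ^ (n - j) - 1) / (real q ^ (j + 1) - 1))"
  unfolding qbinom_def by simp

definition rho :: "nat \<Rightarrow> nat \<Rightarrow> nat \<Rightarrow> real" where
  "rho q n j = qbinom q n j / real (n choose j)"

lemma rho_Suc:
  assumes "j < n"
  shows "rho q n (Suc j) = rho q n j * (((real q ^ (n - j) - 1) * (j + 1)) / ((real q ^ (j + 1) - 1) * (n - j)))"
proof -
  have c: "real (n choose Suc j) = real (n choose j) * (n - j) / (j + 1)"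
    using arg_cong[OF choose_step[of j n], of real] by (simp add: field_simps)
  have "n choose j > 0" using assms by simp
  thus ?thesis using assms unfolding rho_def qbinom_Suc c by (simp add: field_simps of_nat_diff)
qed

lemma rho_up:
  assumes q: "q \<ge> 2" and j: "2 * j + 1 \<le> n"
  shows "rho q n j \<le> rho q n (Suc j)"
proof -
  have pos: "rho q n j > 0" unfolding rho_def using qbinom_pos[OF q] j by simp
  have d: "(real q ^ (j + 1) - 1) * (n - j) > 0"
  proof -
    have "real q ^ (j + 1) > 1" using q by (intro one_less_power) auto
    thus ?thesis using j by simp
  qed
  have "(real q ^ (j + 1) - 1) * real (n - j) \<le> (real q ^ (n - j) - 1) * real (j + 1)"
    using hmono[of "real q" "j + 1" "n - j"] q j by simp
  hence "1 \<le> ((real q ^ (n - j) - 1) * (j + 1)) / ((real q ^ (j + 1) - 1) * (n - j))"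
    using d j by (simp add: of_nat_diff)
  hence "rho q n j * 1 \<le> rho q n j * (((real q ^ (n - j) - 1) * (j + 1)) / ((real q ^ (j + 1) - 1) * (n - j)))"
    using pos by (intro mult_left_mono) auto
  thus ?thesis using rho_Suc[of j n q] j by simp
qed

lemma rho_down:
  assumes q: "q \<ge> 2" and j: "n \<le> 2 * j + 1" "j < n"
  shows "rho q n (Suc j) \<le> rho q n j"
proof -
  have pos: "rho q n j > 0" unfolding rho_def using qbinom_pos[OF q] j by simp
  have d: "(real q ^ (j + 1) - 1) * (n - j) > 0"
  proof -
    have "real q ^ (j + 1) > 1" using q by (intro one_less_power) auto
    thus ?thesis using j by simp
  qed
  have "(real q ^ (n - j) - 1) * real (j + 1) \<le> (real q ^ (j + 1) - 1) * real (n - j)"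
    using hmono[of "real q" "n - j" "j + 1"] q j by simp
  hence "((real q ^ (n - j) - 1) * (j + 1)) / ((real q ^ (j + 1) - 1) * (n - j)) \<le> 1"
    using d j by (simp add: of_nat_diff)
  hence "rho q n j * (((real q ^ (n - j) - 1) * (j + 1)) / ((real q ^ (j + 1) - 1) * (n - j))) \<le> rho q n j * 1"
    using pos by (intro mult_left_mono) auto
  thus ?thesis using rho_Suc[of j n q] j by simp
qed


definition qfact :: "nat \<Rightarrow> nat \<Rightarrow> real" where
  "qfact q m = (\<Prod>i<m. real q ^ (i + 1) - 1)"

lemma qfact_split: "j \<le> n \<Longrightarrow> (\<Prod>i<j. real q ^ (n - i) - 1) * qfact q (n - j) = qfact q n"
proof (induction j)
  case 0 then show ?case by simp
next
  case (Suc j)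
  have e: "n - j = Suc (n - Suc j)" using Suc.prems by simp
  have "qfact q (n - j) = qfact q (n - Suc j) * (real q ^ (n - j) - 1)"
    unfolding qfact_def e by simp
  with Suc show ?case by (simp add: algebra_simps)
qed

lemma qfact_pos: "q \<ge> 2 \<Longrightarrow> qfact q m > 0"
  unfolding qfact_def
proof (intro prod_pos ballI)
  fix i assume "q \<ge> 2"
  hence "real q ^ (i + 1) > 1" by (intro one_less_power) auto
  thus "0 < real q ^ (i + 1) - 1" by simp
qed

lemma qbinom_fact: assumes "q \<ge> 2" "j \<le> n"
  shows "qbinom q n j = qfact q n / (qfact q j * qfact q (n - j))"
proof -
  have "qbinom q n j = (\<Prod>i<j. real q ^ (n - i) - 1) / qfact q j" by (simp add: qbinom_def qfact_def)
  also have "(\<Prod>i<j. real q ^ (n - i) - 1) = qfact q n / qfact q (n - j)"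
    using qfact_split[OF assms(2), of q] qfact_pos[OF assms(1), of "n - j"] by (simp add: field_simps)
  finally show ?thesis by simp
qed

lemma rho_sym: assumes "q \<ge> 2" "j \<le> n" shows "rho q n (n - j) = rho q n j"
  unfolding rho_def using assms qbinom_fact[OF assms] qbinom_fact[of q "n - j" n]
  by (simp add: binomial_symmetric[OF assms(2)] mult.commute)

lemma up_chain:
  fixes f :: "nat \<Rightarrow> real"
  assumes "\<And>i. a \<le> i \<Longrightarrow> i < b \<Longrightarrow> f i \<le> f (Suc i)" "a \<le> b"
  shows "f a \<le> f b"
  using assms(2,1)
proof (induction b rule: dec_induct)
  case (step m) then show ?case by (meson dual_order.trans less_Suc_eq)
qed simp

lemma down_chain:
  fixes f :: "nat \<Rightarrow> real"
  assumes "\<And>i. a \<le> i \<Longrightarrow> i < b \<Longrightarrow> f (Suc i) \<le> f i" "a \<le> b"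
  shows "f b \<le> f a"
  using assms(2,1)
proof (induction b rule: dec_induct)
  case (step m) then show ?case by (meson dual_order.trans less_Suc_eq)
qed simp

lemma lp:
  fixes Q C g :: "nat \<Rightarrow> real"
  assumes fin: "finite J" and MJ: "M \<subseteq> J"
    and pos: "\<And>j. j \<in> J \<Longrightarrow> Q j > 0 \<and> C j > 0 \<and> 0 \<le> g j \<and> g j \<le> Q j"
    and r: "r \<ge> 0" and inM: "\<And>j. j \<in> M \<Longrightarrow> r \<le> Q j / C j"
    and outM: "\<And>j. j \<in> J \<Longrightarrow> j \<notin> M \<Longrightarrow> Q j / C j \<le> r"
    and H: "(\<Sum>j\<in>J. g j * C j / Q j) \<le> (\<Sum>j\<in>M. C j)"
  shows "(\<Sum>j\<in>J. g j) \<le> (\<Sum>j\<in>M. Q j)"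
proof -
  have pw: "g j \<le> (if j \<in> M then Q j else 0) + r * (g j * C j / Q j - (if j \<in> M then C j else 0))"
    if j: "j \<in> J" for j
  proof -
    have p: "Q j > 0" "C j > 0" "0 \<le> g j" "g j \<le> Q j" using pos[OF j] by auto
    define t where "t = r * C j / Q j"
    have t1: "r * (g j * C j / Q j) = t * g j" by (simp add: t_def field_simps)
    have t2: "r * C j = t * Q j" using p by (simp add: t_def field_simps)
    show ?thesis
    proof (cases "j \<in> M")
      case True
      have "t \<le> 1" using inM[OF True] p by (simp add: t_def field_simps)
      hence "0 \<le> (Q j - g j) * (1 - t)" using p by (intro mult_nonneg_nonneg) auto
      thus ?thesis using True t1 t2 by (simp add: algebra_simps)
    next
      case False
      have "t \<ge> 1" using outM[OF j False] p by (simp add: t_def field_simps)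
      hence "0 \<le> g j * (t - 1)" using p by (intro mult_nonneg_nonneg) auto
      thus ?thesis using False t1 by (simp add: algebra_simps)
    qed
  qed
  have "(\<Sum>j\<in>J. g j) \<le> (\<Sum>j\<in>J. (if j \<in> M then Q j else 0) + r * (g j * C j / Q j - (if j \<in> M then C j else 0)))"
    using pw by (intro sum_mono) auto
  also have "\<dots> = (\<Sum>j\<in>J. (if j \<in> M then Q j else 0)) + r * ((\<Sum>j\<in>J. g j * C j / Q j) - (\<Sum>j\<in>J. (if j \<in> M then C j else 0)))"
    by (simp add: sum.distrib sum_distrib_left[symmetric] sum_subtractf[symmetric])
  also have "(\<Sum>j\<in>J. (if j \<in> M then Q j else 0)) = (\<Sum>j\<in>M. Q j)"
    using MJ fin by (simp add: sum.If_cases Int_absorb1)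
  also have "(\<Sum>j\<in>J. (if j \<in> M then C j else 0)) = (\<Sum>j\<in>M. C j)"
    using MJ fin by (simp add: sum.If_cases Int_absorb1)
  also have "r * ((\<Sum>j\<in>J. g j * C j / Q j) - (\<Sum>j\<in>M. C j)) \<le> 0"
    using r H by (simp add: mult_nonneg_nonpos)
  finally show ?thesis by simp
qed


lemma reindex_mid:
  fixes f :: "nat \<Rightarrow> real" and a :: int
  assumes "a \<ge> -1"
  shows "(\<Sum>i=1..k. f (nat (a + int i))) = (\<Sum>j\<in>{nat (a + 1)..<nat (a + 1) + k}. f j)"
proof (rule sum.reindex_bij_witness[of _ "\<lambda>j. j + 1 - nat (a + 1)" "\<lambda>i. nat (a + 1) + i - 1"])
  fix i assume "i \<in> {1..k}" thus "nat (a + 1) + i - 1 + 1 - nat (a + 1) = i" by auto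
next
  fix i assume "i \<in> {1..k}" thus "nat (a + 1) + i - 1 \<in> {nat (a + 1)..<nat (a + 1) + k}" by auto
next
  fix j assume "j \<in> {nat (a + 1)..<nat (a + 1) + k}"
  thus "nat (a + 1) + (j + 1 - nat (a + 1)) - 1 = j" by auto
next
  fix j assume "j \<in> {nat (a + 1)..<nat (a + 1) + k}"
  thus "j + 1 - nat (a + 1) \<in> {1..k}" by auto
next
  fix i assume "i \<in> {1..k}"
  hence "nat (a + int i) = nat (a + 1) + i - 1" using assms by auto
  thus "f (nat (a + 1) + i - 1) = f (nat (a + int i))" by simp
qed

lemma final_ineq:
  fixes g :: "nat \<Rightarrow> real"
  assumes q: "q \<ge> 2" and k: "1 \<le> k" "k \<le> n + 1"
    and g: "\<And>j. j \<le> n \<Longrightarrow> 0 \<le> g j \<and> g j \<le> qbinom q n j"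
    and H: "(\<Sum>j\<le>n. g j * real (n choose j) / qbinom q n j) \<le> real (Sigma_mid n k)"
  shows "(\<Sum>j\<le>n. g j) \<le> Sigma_q q n k"
proof -
  define a where "a = (int n - int k) div 2"
  define lo where "lo = nat (a + 1)"
  define hi where "hi = lo + k - 1"
  have a1: "2 * a \<le> int n - int k" "int n - int k \<le> 2 * a + 1" unfolding a_def by linarith+
  have am: "a \<ge> -1" using a1 k by linarith
  have ilo: "int lo = a + 1" using am by (simp add: lo_def)
  have F1: "2 * lo + k \<le> n + 2" using a1 ilo by linarith
  have F2: "n + 1 \<le> 2 * lo + k" using a1 ilo by linarith
  have F3: "lo + k \<le> n + 1" using F1 k by linarith
  have hi_le: "hi \<le> n" "lo \<le> hi" using F3 k by (auto simp: hi_def)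
  have M_eq: "{lo..<lo+k} = {lo..hi}" using k by (auto simp: hi_def)
  have SM0: "real (Sigma_mid n k) = (\<Sum>j\<in>{nat (a + 1)..<nat (a + 1) + k}. real (n choose j))"
    unfolding Sigma_mid_def of_nat_sum a_def[symmetric]
    by (rule reindex_mid[OF am])
  have SM: "real (Sigma_mid n k) = (\<Sum>j\<in>{lo..hi}. real (n choose j))"
    using SM0 M_eq by (simp add: lo_def)
  have SQ0: "Sigma_q q n k = (\<Sum>j\<in>{nat (a + 1)..<nat (a + 1) + k}. qbinom q n j)"
    unfolding Sigma_q_def a_def[symmetric]
    by (rule reindex_mid[OF am])
  have SQ: "Sigma_q q n k = (\<Sum>j\<in>{lo..hi}. qbinom q n j)"
    using SQ0 M_eq by (simp add: lo_def)
  let ?rho = "rho q n"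
  define r where "r = min (?rho lo) (?rho hi)"
  have rho_pos: "?rho j > 0" if "j \<le> n" for j
    unfolding rho_def using qbinom_pos[OF q that] that by simp
  have up: "?rho i \<le> ?rho (Suc i)" if "2 * i + 1 \<le> n" for i using rho_up[OF q that] .
  have down: "?rho (Suc i) \<le> ?rho i" if "n \<le> 2 * i + 1" "i < n" for i using rho_down[OF q that] .
  have inM: "r \<le> ?rho j" if j: "j \<in> {lo..hi}" for j
  proof (cases "2 * j \<le> n + 1")
    case True
    have "?rho lo \<le> ?rho j"
      by (rule up_chain[of lo j ?rho]) (use True j up in auto)
    thus ?thesis by (simp add: r_def)
  next
    case False
    have "?rho hi \<le> ?rho j"
      by (rule down_chain[of j hi ?rho]) (use False j down hi_le in auto)
    thus ?thesis by (simp add: r_def)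
  qed
  have below: "?rho j \<le> r" if j: "j < lo" for j
  proof -
    have "?rho j \<le> ?rho lo"
    proof (rule up_chain[of j lo ?rho])
      fix i assume "j \<le> i" "i < lo"
      hence "2 * i + 1 \<le> n" using F1 k by linarith
      thus "?rho i \<le> ?rho (Suc i)" by (rule up)
    qed (use j in auto)
    moreover have "?rho j \<le> ?rho (n - hi)"
      by (rule up_chain[of j "n - hi" ?rho]) (use j F1 F2 up hi_le in \<open>auto simp: hi_def\<close>)
    moreover have "?rho (n - hi) = ?rho hi" using rho_sym[OF q hi_le(1)] .
    ultimately show ?thesis by (simp add: r_def)
  qed
  have outM: "?rho j \<le> r" if j: "j \<le> n" "j \<notin> {lo..hi}" for j
  proof (cases "j < lo")
    case True thus ?thesis by (rule below)
  next
    case False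
    hence "j > hi" using j by auto
    hence "n - j < lo" using F2 j by (auto simp: hi_def)
    hence "?rho (n - j) \<le> r" by (rule below)
    thus ?thesis using rho_sym[OF q j(1)] by simp
  qed
  have "(\<Sum>j\<le>n. g j) \<le> (\<Sum>j\<in>{lo..hi}. qbinom q n j)"
  proof (rule lp[where C = "\<lambda>j. real (n choose j)" and r = r])
    show "finite {..n}" by simp
    show "{lo..hi} \<subseteq> {..n}" using hi_le by auto
    show "0 < qbinom q n j \<and> 0 < real (n choose j) \<and> 0 \<le> g j \<and> g j \<le> qbinom q n j" if "j \<in> {..n}" for j
      using that g[of j] qbinom_pos[OF q, of j n] by auto
    show "0 \<le> r" using rho_pos[of lo] rho_pos[of hi] hi_le by (simp add: r_def)
    show "r \<le> qbinom q n j / real (n choose j)" if "j \<in> {lo..hi}" for j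
      using inM[OF that] by (simp add: rho_def)
    show "qbinom q n j / real (n choose j) \<le> r" if "j \<in> {..n}" "j \<notin> {lo..hi}" for j
      using outM[of j] that by (simp add: rho_def)
    show "(\<Sum>j\<le>n. g j * real (n choose j) / qbinom q n j) \<le> (\<Sum>j\<in>{lo..hi}. real (n choose j))"
      using H SM by simp
  qed
  thus ?thesis using SQ by simp
qed


lemma prod_split_nat:
  fixes f :: "nat \<Rightarrow> 'b::comm_monoid_mult"
  assumes "d \<le> n"
  shows "(\<Prod>i<n. f i) = (\<Prod>i<d. f i) * (\<Prod>i<n - d. f (d + i))"
  using assms
proof (induction n rule: dec_induct)
  case base then show ?case by simp
next
  case (step m)
  have "Suc m - d = Suc (m - d)" using step(1) by simp
  with step show ?case by (simp add: mult.assoc)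
qed

lemma aux_div: "(x::real) * d = m \<Longrightarrow> d > 0 \<Longrightarrow> x = m / d"
  by (simp add: field_simps)

lemma card_Sj_real:
  assumes j: "j \<le> CARD('n::finite)"
  shows "real (card {U :: ('n \<Rightarrow> 'a::{field,finite}) set. V.subspace U \<and> V.dim U = j})
    = qbinom CARD('a) CARD('n) j"
proof -
  let ?q = "CARD('a)" and ?n = "CARD('n)"
  let ?S = "{U :: ('n \<Rightarrow> 'a) set. V.subspace U \<and> V.dim U = j}"
  have q: "?q \<ge> 2" by (rule q_ge2)
  define P where "P = (\<Prod>i<j. real ?q ^ i)"
  have Ppos: "P > 0" unfolding P_def using q by (intro prod_pos) auto
  have num: "real (\<Prod>i<j. ?q ^ ?n - ?q ^ i) = P * (\<Prod>i<j. real ?q ^ (?n - i) - 1)"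
  proof -
    have "real (\<Prod>i<j. ?q ^ ?n - ?q ^ i) = (\<Prod>i<j. real ?q ^ i * (real ?q ^ (?n - i) - 1))"
    proof (simp only: of_nat_prod, rule prod.cong[OF refl])
      fix i assume "i \<in> {..<j}"
      hence i: "i \<le> ?n" using j by simp
      have le: "?q ^ i \<le> ?q ^ ?n" using q i by (intro power_increasing) auto
      have "real ?q ^ ?n = real ?q ^ i * real ?q ^ (?n - i)" using i by (simp add: power_add[symmetric])
      thus "real (?q ^ ?n - ?q ^ i) = real ?q ^ i * (real ?q ^ (?n - i) - 1)"
        using le by (simp add: of_nat_diff algebra_simps)
    qed
    thus ?thesis by (simp add: P_def prod.distrib)
  qed
  have den: "real (cnt1 ?q j) = P * (\<Prod>i<j. real ?q ^ (i + 1) - 1)"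
  proof -
    have "real (cnt1 ?q j) = (\<Prod>i<j. real ?q ^ i * (real ?q ^ (j - i) - 1))"
    proof (simp only: cnt1_def of_nat_prod, rule prod.cong[OF refl])
      fix i assume "i \<in> {..<j}"
      hence i: "i \<le> j" by simp
      have le: "?q ^ i \<le> ?q ^ j" using q i by (intro power_increasing) auto
      have "real ?q ^ j = real ?q ^ i * real ?q ^ (j - i)" using i by (simp add: power_add[symmetric])
      thus "real (?q ^ j - ?q ^ i) = real ?q ^ i * (real ?q ^ (j - i) - 1)"
        using le by (simp add: of_nat_diff algebra_simps)
    qed
    also have "\<dots> = P * (\<Prod>i<j. real ?q ^ (j - i) - 1)" by (simp add: P_def prod.distrib)
    also have "(\<Prod>i<j. real ?q ^ (j - i) - 1) = (\<Prod>i<j. real ?q ^ (j - Suc i + 1) - 1)"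
    proof (rule prod.cong[OF refl])
      fix i assume "i \<in> {..<j}"
      hence "j - i = j - Suc i + 1" by auto
      thus "real ?q ^ (j - i) - 1 = real ?q ^ (j - Suc i + 1) - 1" by (simp only:)
    qed
    also have "\<dots> = (\<Prod>i<j. real ?q ^ (i + 1) - 1)"
      by (rule prod.nat_diff_reindex[where g = "\<lambda>k. real ?q ^ (k + 1) - 1"])
    finally show ?thesis .
  qed
  have dpos: "(\<Prod>i<j. real ?q ^ (i + 1) - 1) > 0"
  proof (intro prod_pos ballI)
    fix i have "real ?q ^ (i + 1) > 1" using q by (intro one_less_power) auto
    thus "0 < real ?q ^ (i + 1) - 1" by simp
  qed
  have "real (card ?S) * real (cnt1 ?q j) = real (\<Prod>i<j. ?q ^ ?n - ?q ^ i)"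
    using arg_cong[OF count_sub[where 'n='n and 'a='a and j=j], of real] by simp
  hence "real (card ?S) * (P * (\<Prod>i<j. real ?q ^ (i + 1) - 1)) = P * (\<Prod>i<j. real ?q ^ (?n - i) - 1)"
    using num den by simp
  hence "real (card ?S) * (\<Prod>i<j. real ?q ^ (i + 1) - 1) = (\<Prod>i<j. real ?q ^ (?n - i) - 1)"
    using Ppos by simp
  from aux_div[OF this dpos] show ?thesis unfolding qbinom_def .
qed


lemma dim_le_n: "V.dim (U :: ('n::finite \<Rightarrow> 'a::{field,finite}) set) \<le> CARD('n)"
proof -
  obtain B where B: "B \<subseteq> U" "V.independent B" "U \<subseteq> V.span B" "card B = V.dim U"
    using V.basis_exists by blast
  have "CARD('a) ^ card B = card (V.span B)" using card_span_indep[OF B(2)] by simp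
  also have "\<dots> \<le> CARD('n \<Rightarrow> 'a)" by (rule card_mono) auto
  also have "\<dots> = CARD('a) ^ CARD('n)" by (simp add: card_fun)
  finally have "CARD('a) ^ card B \<le> CARD('a) ^ CARD('n)" .
  hence "card B \<le> CARD('n)" using q_ge2[where 'a='a] by (simp add: power_le_imp_le_exp)
  thus ?thesis using B(4) by simp
qed

lemma card_filter_sum: "finite A \<Longrightarrow> card {x \<in> A. P x} = (\<Sum>x\<in>A. if P x then 1 else 0)"
  by (simp add: sum.If_cases Int_def)

theorem theorem1p3:
  fixes T_set :: "'n::finite set set \<Rightarrow> bool"
    and T_sub :: "('n \<Rightarrow> 'a::{field,finite}) set set \<Rightarrow> bool"
    and k :: nat
  assumes "1 \<le> k" and "k \<le> CARD('n) + 1"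
    and hered_set: "\<And>F G. T_set F \<Longrightarrow> G \<subseteq> F \<Longrightarrow> T_set G"
    and hered_sub: "\<And>F G. F \<subseteq> subspaces \<Longrightarrow> T_sub F \<Longrightarrow> G \<subseteq> F \<Longrightarrow> T_sub G"
    and invariant: "\<And>(\<phi> :: 'n set \<Rightarrow> ('n \<Rightarrow> 'a) set) A.
                      subspace_embedding \<phi> \<Longrightarrow> T_sub (\<phi> ` A) \<longleftrightarrow> T_set A"
    and bound: "\<And>F. T_set F \<Longrightarrow> card F \<le> Sigma_mid CARD('n) k"
  shows "\<forall>G. G \<subseteq> subspaces \<and> T_sub G \<longrightarrow> real (card G) \<le> Sigma_q CARD('a) CARD('n) k"
proof (intro allI impI, elim conjE)
  fix G :: "('n \<Rightarrow> 'a) set set" assume Gs: "G \<subseteq> subspaces" and TG: "T_sub G"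
  let ?q = "CARD('a)" and ?n = "CARD('n)"
  let ?F = "frames :: ('n \<Rightarrow> ('n \<Rightarrow> 'a)) set"
  have q: "?q \<ge> 2" by (rule q_ge2)
  have Gsub: "V.subspace U" if "U \<in> G" for U using Gs that by (auto simp: subspaces_def)
  have dimle: "V.dim U \<le> ?n" for U :: "('n \<Rightarrow> 'a) set"
    by (rule dim_le_n)
  define P where "P B U \<longleftrightarrow> (\<exists>A. V.span (B ` A) = U)" for B :: "'n \<Rightarrow> ('n \<Rightarrow> 'a)" and U
  have c1: "card {U \<in> G. P B U} \<le> Sigma_mid ?n k" if B: "B \<in> ?F" for B
  proof -
    have Bi: "inj B" "V.independent (range B)" using B by (auto simp: frames_def)
    define AB where "AB = {A. V.span (B ` A) \<in> G}"
    have img: "(\<lambda>A. V.span (B ` A)) ` AB = {U \<in> G. P B U}" by (auto simp: AB_def P_def)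
    have emb: "subspace_embedding (\<lambda>A. V.span (B ` A))" by (rule frame_embedding[OF Bi])
    have "T_sub ((\<lambda>A. V.span (B ` A)) ` AB)"
      by (rule hered_sub[OF Gs TG]) (auto simp: img)
    hence "T_set AB" using invariant[OF emb] by simp
    hence "card AB \<le> Sigma_mid ?n k" by (rule bound)
    moreover have "inj (\<lambda>A. V.span (B ` A))" using emb by (simp add: subspace_embedding_def)
    hence "card ((\<lambda>A. V.span (B ` A)) ` AB) = card AB"
      by (intro card_image) (simp add: inj_on_def inj_def)
    ultimately show ?thesis using img by simp
  qed
  have "(\<Sum>B\<in>?F. card {U \<in> G. P B U}) \<le> (\<Sum>B\<in>?F. Sigma_mid ?n k)"
    by (rule sum_mono) (rule c1)
  hence sum1: "(\<Sum>B\<in>?F. card {U \<in> G. P B U}) \<le> card ?F * Sigma_mid ?n k" by simp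
  have swap: "(\<Sum>B\<in>?F. card {U \<in> G. P B U}) = (\<Sum>U\<in>G. card {B \<in> ?F. P B U})"
    by (simp add: card_filter_sum) (rule sum.swap)
  define Q where "Q j = qbinom ?q ?n j" for j
  define C where "C j = real (?n choose j)" for j
  have Qpos: "Q j > 0" if "j \<le> ?n" for j unfolding Q_def using qbinom_pos[OF q that] .
  have Fpos: "card ?F > 0"
  proof -
    have "(\<Prod>i<?n. ?q ^ ?n - ?q ^ i) > 0"
    proof (intro prod_pos ballI)
      fix i assume "i \<in> {..<?n}"
      hence "?q ^ i < ?q ^ ?n" using q by (intro power_strict_increasing) auto
      thus "0 < ?q ^ ?n - ?q ^ i" by simp
    qed
    thus ?thesis using card_frames[where 'n='n and 'a='a] by simp
  qed
  have each: "real (card {B \<in> ?F. P B U}) = real (card ?F) * (C (V.dim U) / Q (V.dim U))"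
    if U: "U \<in> G" for U
  proof -
    let ?d = "V.dim U"
    have d: "?d \<le> ?n" by (rule dimle)
    have N: "card {B \<in> ?F. P B U} = (?n choose ?d) * (cnt1 ?q ?d * cnt2 ?q ?n ?d)"
      using count_U[OF Gsub[OF U]] by (simp add: P_def)
    have "card ?F = (\<Prod>i<?d. ?q ^ ?n - ?q ^ i) * cnt2 ?q ?n ?d"
      using card_frames[where 'n='n and 'a='a] prod_split_nat[OF d, of "\<lambda>i. ?q ^ ?n - ?q ^ i"]
      by (simp add: cnt2_def)
    also have "(\<Prod>i<?d. ?q ^ ?n - ?q ^ i) =
        card {U :: ('n \<Rightarrow> 'a) set. V.subspace U \<and> V.dim U = ?d} * cnt1 ?q ?d"
      using count_sub[where 'n='n and 'a='a and j="?d"] by simp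
    finally have Fe: "real (card ?F) = Q ?d * real (cnt1 ?q ?d) * real (cnt2 ?q ?n ?d)"
      using card_Sj_real[OF d, where 'a='a] by (simp add: Q_def)
    show ?thesis using N Fe Qpos[OF d] by (simp add: C_def field_simps)
  qed
  have "real (card ?F) * (\<Sum>U\<in>G. C (V.dim U) / Q (V.dim U)) = (\<Sum>U\<in>G. real (card {B \<in> ?F. P B U}))"
    using each by (simp add: sum_distrib_left)
  also have "\<dots> = real (\<Sum>B\<in>?F. card {U \<in> G. P B U})" using swap by simp
  also have "\<dots> \<le> real (card ?F * Sigma_mid ?n k)" using sum1 by (rule of_nat_mono)
  also have "\<dots> = real (card ?F) * real (Sigma_mid ?n k)" by simp
  finally have HU: "(\<Sum>U\<in>G. C (V.dim U) / Q (V.dim U)) \<le> real (Sigma_mid ?n k)"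
    using Fpos by simp
  define g where "g j = card {U \<in> G. V.dim U = j}" for j
  have fG: "finite G" by simp
  have dimG: "(\<lambda>U. V.dim U) ` G \<subseteq> {..?n}" using dimle by auto
  have grp: "(\<Sum>j\<le>?n. real (g j) * C j / Q j) = (\<Sum>U\<in>G. C (V.dim U) / Q (V.dim U))"
  proof -
    have "(\<Sum>U\<in>G. C (V.dim U) / Q (V.dim U)) = (\<Sum>j\<le>?n. \<Sum>U\<in>{x. x \<in> G \<and> V.dim x = j}. C (V.dim U) / Q (V.dim U))"
      by (rule sum.group[OF fG _ dimG, symmetric]) simp
    also have "\<dots> = (\<Sum>j\<le>?n. real (g j) * C j / Q j)"
    proof (rule sum.cong[OF refl])
      fix j
      have "(\<Sum>U\<in>{x. x \<in> G \<and> V.dim x = j}. C (V.dim U) / Q (V.dim U)) = (\<Sum>U\<in>{x. x \<in> G \<and> V.dim x = j}. C j / Q j)"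
        by (rule sum.cong) auto
      thus "(\<Sum>U\<in>{x. x \<in> G \<and> V.dim x = j}. C (V.dim U) / Q (V.dim U)) = real (g j) * C j / Q j"
        by (simp add: g_def)
    qed
    finally show ?thesis by simp
  qed
  have cardG: "real (card G) = (\<Sum>j\<le>?n. real (g j))"
  proof -
    have "card G = (\<Sum>j\<le>?n. card {x. x \<in> G \<and> V.dim x = j})"
      using sum.group[OF fG _ dimG, of "\<lambda>_. 1::nat"] by simp
    thus ?thesis by (simp add: g_def)
  qed
  have gle: "0 \<le> real (g j) \<and> real (g j) \<le> qbinom ?q ?n j" if j: "j \<le> ?n" for j
  proof -
    have "g j \<le> card {U :: ('n \<Rightarrow> 'a) set. V.subspace U \<and> V.dim U = j}"
      unfolding g_def by (rule card_mono) (auto simp: Gsub)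
    thus ?thesis using card_Sj_real[OF j, where 'a='a] by simp
  qed
  have "(\<Sum>j\<le>?n. real (g j)) \<le> Sigma_q ?q ?n k"
    by (rule final_ineq[OF q assms(1) assms(2)]) (use gle grp HU in \<open>simp_all add: C_def Q_def\<close>)
  thus "real (card G) \<le> Sigma_q ?q ?n k" using cardG by simp
qed

end
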